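(* For every $(\overline{u}_{T,k+1/2})_{k=1}^4\in\mathbb{R}^4$ and every saturations $S_1,\dots,S_4$, the interfacial mobility ratios $\overline{\boldsymbol{\chi}}_\ell=\boldsymbol{A}^{-1}\boldsymbol{B}\boldsymbol{\chi}_\ell$ are well defined, and for every $k\in\{1,\dots,4\}$, $$\overline{V}_{w,k+1/2}+\overline{V}_{\textit{nw},k+1/2}=\overline{u}_{T,k+1/2}.$$
   Context: Indices in $\{1,2,3,4\}$ are cyclic mod 4. Two phases $w,\textit{nw}$ with mobilities $\lambda_w,\lambda_{\textit{nw}}\ge0$ (functions of the wetting saturation $S$) with $\lambda_T=\lambda_w+\lambda_{\textit{nw}}>0$; $\chi_{\ell,k}=\lambda_\ell(S_k)/\lambda_T(S_k)$ and $\boldsymbol{\chi}_\ell=(\chi_{\ell,1},\dots,\chi_{\ell,4})^T$. Limiter $\varphi(r)=\dfrac{r^4+r^3+r^2+r}{r^4+r^3+r^2+r+1}$, $r\ge0$. $\overline{\omega}^V_{k+1/2}=\varphi(\max(0,\overline{u}_{T,k-1/2}/\overline{u}_{T,k+1/2}))$ if $\overline{u}_{T,k+1/2}>0$, $=\varphi(\max(0,\overline{u}_{T,k+3/2}/\overline{u}_{T,k+1/2}))$ if $\overline{u}_{T,k+1/2}<0$, $=0$ otherwise. $\boldsymbol{A}$: $a_{kk}=1$, $a_{k,k-1}=-\overline{\omega}^V_{k+1/2}$ if $\overline{u}_{T,k+1/2}\ge0$ (else $0$), $a_{k,k+1}=-\overline{\omega}^V_{k+1/2}$ if $\overline{u}_{T,k+1/2}<0$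 (else $0$), other entries $0$. $\boldsymbol{B}$: $b_{kk}=1-\overline{\omega}^V_{k+1/2}$ if $\overline{u}_{T,k+1/2}\ge0$ (else $0$), $b_{k,k+1}=1-\overline{\omega}^V_{k+1/2}$ if $\overline{u}_{T,k+1/2}<0$ (else $0$), other entries $0$. $\overline{\chi}_{\ell,k+1/2}$ is the $k$-th entry of $\overline{\boldsymbol{\chi}}_\ell$, and the viscous flux is $\overline{V}_{\ell,k+1/2}=\overline{\chi}_{\ell,k+1/2}\overline{u}_{T,k+1/2}$. *)

theory Defs
  imports "HOL-Analysis.Analysis"
begin

text \<open>Cells/interfaces are indexed by the numeral type 4 (arithmetic mod 4).
  Index k of a vector u stands for the interface k+1/2; so u$(k-1) is the
  interface k-1/2 and u$(k+1) is k+3/2.\<close>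

definition limiter :: "real \<Rightarrow> real" where
  "limiter r = (r^4 + r^3 + r^2 + r) / (r^4 + r^3 + r^2 + r + 1)"

definition omegaV :: "real^4 \<Rightarrow> 4 \<Rightarrow> real" where
  "omegaV u k =
     (if u$k > 0 then limiter (max 0 (u$(k-1) / u$k))
      else if u$k < 0 then limiter (max 0 (u$(k+1) / u$k))
      else 0)"

definition matA :: "real^4 \<Rightarrow> real^4^4" where
  "matA u = (\<chi> k j. if j = k then 1
                 else if j = k - 1 \<and> u$k \<ge> 0 then - omegaV u k
                 else if j = k + 1 \<and> u$k < 0 then - omegaV u k
                 else 0)"

definition matB :: "real^4 \<Rightarrow> real^4^4" where
  "matB u = (\<chi> k j. if j = k \<and> u$k \<ge> 0 then 1 - omegaV u k
                 else if j = k + 1 \<and> u$k < 0 then 1 - omegaV u k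
                 else 0)"

definition chiVec :: "(real \<Rightarrow> real) \<Rightarrow> (real \<Rightarrow> real) \<Rightarrow> real^4 \<Rightarrow> real^4" where
  "chiVec lam lamT S = (\<chi> k. lam (S$k) / lamT (S$k))"

definition chiBar :: "real^4 \<Rightarrow> (real \<Rightarrow> real) \<Rightarrow> (real \<Rightarrow> real) \<Rightarrow> real^4 \<Rightarrow> real^4" where
  "chiBar u lam lamT S = matrix_inv (matA u) *v (matB u *v chiVec lam lamT S)"

definition Vflux :: "real^4 \<Rightarrow> (real \<Rightarrow> real) \<Rightarrow> (real \<Rightarrow> real) \<Rightarrow> real^4 \<Rightarrow> 4 \<Rightarrow> real" where
  "Vflux u lam lamT S k = chiBar u lam lamT S $ k * u$k"

end

theory Submission
  imports Defs
begin

lemma limiter_bounds: "r \<ge> 0 \<Longrightarrow> 0 \<le> limiter r \<and> limiter r < 1"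
proof -
  assume r: "r \<ge> 0"
  define n where "n = r^4 + r^3 + r^2 + r"
  have n: "n \<ge> 0" unfolding n_def using r by simp
  have "limiter r = n / (n + 1)" unfolding limiter_def n_def by simp
  moreover have "n / (n+1) < 1" using n by simp
  moreover have "0 \<le> n / (n+1)" using n by simp
  ultimately show ?thesis by simp
qed

lemma omega_bounds: "0 \<le> omegaV u k \<and> omegaV u k < 1"
  unfolding omegaV_def using limiter_bounds by auto

lemma neq4: "(k::4) - 1 \<noteq> k" "(k::4) + 1 \<noteq> k"
  by (induct k; simp)+

lemma rowA: "\<exists>j. j \<noteq> k \<and> (matA u *v x)$k = x$k - omegaV u k * x$j"
proof (cases "u$k \<ge> 0")
  case True
  have "(matA u *v x)$k = (\<Sum>j\<in>UNIV. (if j = k then x$k else 0) + (if j = k - 1 then - omegaV u k * x$(k-1) else 0))"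
    unfolding matrix_vector_mult_def matA_def using True neq4
    by (auto intro!: sum.cong)
  also have "\<dots> = x$k - omegaV u k * x$(k-1)" by (simp add: sum.distrib)
  finally show ?thesis using neq4 by blast
next
  case False
  have "(matA u *v x)$k = (\<Sum>j\<in>UNIV. (if j = k then x$k else 0) + (if j = k + 1 then - omegaV u k * x$(k+1) else 0))"
    unfolding matrix_vector_mult_def matA_def using False neq4
    by (auto intro!: sum.cong)
  also have "\<dots> = x$k - omegaV u k * x$(k+1)" by (simp add: sum.distrib)
  finally show ?thesis using neq4 by blast
qed

lemma A_one: "matA u *v (\<chi> k. 1) = matB u *v (\<chi> k. 1)"
proof -
  have "(matA u *v (\<chi> k. 1))$k = 1 - omegaV u k" for k
    using rowA[of k u "\<chi> k. 1"] by auto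
  moreover have "(matB u *v (\<chi> k. 1))$k = 1 - omegaV u k" for k
  proof (cases "u$k \<ge> 0")
    case True
    have "(matB u *v (\<chi> k. 1))$k = (\<Sum>j\<in>UNIV. if j = k then 1 - omegaV u k else 0)"
      unfolding matrix_vector_mult_def matB_def
      by (rule trans[OF vec_lambda_beta], rule sum.cong) (use True in auto)
    then show ?thesis by simp
  next
    case False
    have "(matB u *v (\<chi> k. 1))$k = (\<Sum>j\<in>UNIV. if j = k + 1 then 1 - omegaV u k else 0)"
      unfolding matrix_vector_mult_def matB_def using False neq4
      by (auto intro!: sum.cong)
    then show ?thesis by simp
  qed
  ultimately show ?thesis by (simp add: vec_eq_iff)
qed

lemma A_inv: "invertible (matA u)"
proof -
  have "x = 0" if h: "matA u *v x = 0" for x :: "real^4"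
  proof -
    have "Max (range (\<lambda>k. \<bar>x$k\<bar>)) \<in> range (\<lambda>k. \<bar>x$k\<bar>)"
      by (rule Max_in) auto
    then obtain m where mm: "\<bar>x$m\<bar> = Max (range (\<lambda>k. \<bar>x$k\<bar>))" by (metis imageE)
    have m: "\<forall>k. \<bar>x$k\<bar> \<le> \<bar>x$m\<bar>" unfolding mm by (auto intro: Max_ge)
    obtain j where "j \<noteq> m" and e: "(matA u *v x)$m = x$m - omegaV u m * x$j" using rowA by blast
    then have "x$m = omegaV u m * x$j" using h by simp
    then have "\<bar>x$m\<bar> = omegaV u m * \<bar>x$j\<bar>" using omega_bounds by (simp add: abs_mult)
    also have "\<dots> \<le> omegaV u m * \<bar>x$m\<bar>" using m omega_bounds by (simp add: mult_left_mono)
    finally have "\<bar>x$m\<bar> = 0" using omega_bounds[of u m]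
      by (smt (verit) mult_less_cancel_right2 abs_ge_zero)
    then show ?thesis using m by (simp add: vec_eq_iff)
  qed
  then show ?thesis unfolding invertible_left_inverse matrix_left_invertible_ker by blast
qed

theorem mainTheorem3:
  fixes u :: "real^4" and S :: "real^4" and lam_w lam_nw :: "real \<Rightarrow> real"
  assumes "\<And>s. lam_w s \<ge> 0" and "\<And>s. lam_nw s \<ge> 0"
    and "\<And>s. lam_w s + lam_nw s > 0"
  shows "invertible (matA u) \<and>
    (\<forall>k. Vflux u lam_w (\<lambda>s. lam_w s + lam_nw s) S k
        + Vflux u lam_nw (\<lambda>s. lam_w s + lam_nw s) S k = u$k)"
proof -
  let ?T = "\<lambda>s. lam_w s + lam_nw s"
  have inv: "invertible (matA u)" by (rule A_inv)
  have li: "matrix_inv (matA u) ** matA u = mat 1"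
    using inv unfolding invertible_def matrix_inv_def by (metis (mono_tags, lifting) someI_ex)
  have c: "chiVec lam_w ?T S + chiVec lam_nw ?T S = (\<chi> k. 1)"
    using assms(3) unfolding chiVec_def
    by (simp add: vec_eq_iff add_divide_distrib[symmetric]) (metis less_irrefl)
  have "chiBar u lam_w ?T S + chiBar u lam_nw ?T S = matrix_inv (matA u) *v (matB u *v (\<chi> k. 1))"
    unfolding chiBar_def c[symmetric] by (simp add: matrix_vector_right_distrib)
  also have "\<dots> = (\<chi> k. 1)"
    by (simp add: A_one[symmetric] matrix_vector_mul_assoc li)
  finally have s: "chiBar u lam_w ?T S + chiBar u lam_nw ?T S = (\<chi> k. 1)" .
  have "Vflux u lam_w ?T S k + Vflux u lam_nw ?T S k = u$k" for k
  proof -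
    have "chiBar u lam_w ?T S $ k + chiBar u lam_nw ?T S $ k = 1"
      using s by (metis vector_add_component vec_lambda_beta)
    then show ?thesis unfolding Vflux_def by (metis distrib_right mult_1)
  qed
  with inv show ?thesis by blast
qed

end
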